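(* Let $K$ be an infinite compact Hausdorff space with finitely many accumulation points, let $K'$ be its (finite) set of accumulation points, and let $F:B_{C(K)}\to B_{C(K)}$ be a non-expansive bijection. Then there exist a homeomorphism $\sigma:K\to K$ and a continuous function $\alpha:K\to\{-1,1\}$ such that for every $f\in B_{C(K)}$ and every $a\in K\setminus K'$: (1) if $f(a)=0$, then $F(f)(\sigma(a))=0$; (2) if $f(a)\alpha(a)<0$, then $F(f)(\sigma(a))\leq 0$; (3) if $f(a)\alpha(a)>0$, then $F(f)(\sigma(a))\geq 0$.
   Context: $C(K)$ is the Banach space of real-valued continuous functions on $K$ with the supremum norm and $B_{C(K)}$ its closed unit ball. A map is non-expansive if it is $1$-Lipschitz. *)

theory Defs
  imports "HOL-Analysis.Analysis"
begin

end

theory Submission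
  imports Defs
begin


lemma bchoice_elim: "\<forall>x\<in>S. \<exists>y. P x y \<Longrightarrow> (\<And>f. \<forall>x\<in>S. P x (f x) \<Longrightarrow> thesis) \<Longrightarrow> thesis"
  using bchoice by metis


lemma iso_open:
  fixes a :: "'a::t2_space"
  assumes "\<not> a islimpt UNIV" shows "open {a}"
proof -
  from assms have "\<exists>T. a \<in> T \<and> open T \<and> (\<forall>y\<in>T. y = a)"
    unfolding islimpt_def by blast
  then obtain T where "a \<in> T" "open T" "\<forall>y\<in>T. y = a" by blast
  then have "T = {a}" by blast
  with \<open>open T\<close> show ?thesis by simp
qed

lemma iso_dense:
  fixes V :: "'a::t2_space set"
  assumes fin: "finite {x :: 'a. x islimpt UNIV}" and "open V" "V \<noteq> {}"
  shows "\<exists>a\<in>V. \<not> a islimpt UNIV"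
proof (rule ccontr)
  assume "\<not> ?thesis"
  then have sub: "V \<subseteq> {x. x islimpt UNIV}" by auto
  from \<open>V \<noteq> {}\<close> obtain v where "v \<in> V" by auto
  have "finite (V - {v})" using finite_subset[OF _ fin] sub by auto
  then have "closed (V - {v})" by (rule finite_imp_closed)
  then have "open (V - (V - {v}))" using \<open>open V\<close> by (intro open_Diff)
  moreover have "V - (V - {v}) = {v}" using \<open>v \<in> V\<close> by auto
  ultimately have "open {v}" by simp
  then have "\<not> v islimpt UNIV" unfolding islimpt_def by auto
  with sub \<open>v \<in> V\<close> show False by auto
qed

lemma iso_eq:
  fixes g1 g2 :: "'a::t2_space \<Rightarrow> real"
  assumes fin: "finite {x :: 'a. x islimpt UNIV}"
    and c1: "continuous_on UNIV g1" and c2: "continuous_on UNIV g2"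
    and eq: "\<And>a. \<not> a islimpt UNIV \<Longrightarrow> g1 a = g2 a"
  shows "g1 = g2"
proof (rule ccontr)
  assume "g1 \<noteq> g2"
  then have "{x. g1 x \<noteq> g2 x} \<noteq> {}" by auto
  moreover have "open {x. g1 x \<noteq> g2 x}" by (rule open_Collect_neq[OF c1 c2])
  ultimately have "\<exists>a\<in>{x. g1 x \<noteq> g2 x}. \<not> a islimpt UNIV"
    using iso_dense[OF fin] by blast
  then obtain a where "g1 a \<noteq> g2 a" "\<not> a islimpt UNIV" by blast
  with eq show False by auto
qed

lemma compact_iso_finite:
  fixes S :: "'a::t2_space set"
  assumes "compact S" "\<And>s. s \<in> S \<Longrightarrow> \<not> s islimpt UNIV"
  shows "finite S"
proof -
  have o: "\<And>s. s \<in> S \<Longrightarrow> open {s}" using assms(2) iso_open by blast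
  obtain S' where "S' \<subseteq> S" "finite S'" "S \<subseteq> (\<Union>s\<in>S'. {s})"
    by (rule compactE_image[OF assms(1), of S "\<lambda>s. {s}"]) (use o in auto)
  then have "S \<subseteq> S'" by auto
  then show ?thesis using \<open>finite S'\<close> by (rule finite_subset)
qed

lemma sep_point_compact:
  fixes q :: "'a::t2_space"
  assumes "compact N" "q \<notin> N"
  shows "\<exists>U. open U \<and> q \<in> U \<and> closure U \<inter> N = {}"
proof -
  have "\<forall>n\<in>N. \<exists>U V. open U \<and> open V \<and> q \<in> U \<and> n \<in> V \<and> U \<inter> V = {}"
  proof
    fix n assume "n \<in> N"
    then have "q \<noteq> n" using assms(2) by auto
    then show "\<exists>U V. open U \<and> open V \<and> q \<in> U \<and> n \<in> V \<and> U \<inter> V = {}"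
      by (rule hausdorff)
  qed
  then obtain U where "\<forall>n\<in>N. \<exists>V. open (U n) \<and> open V \<and> q \<in> U n \<and> n \<in> V \<and> U n \<inter> V = {}"
    by (rule bchoice_elim)
  then obtain V where "\<forall>n\<in>N. open (U n) \<and> open (V n) \<and> q \<in> U n \<and> n \<in> V n \<and> U n \<inter> V n = {}"
    by (rule bchoice_elim)
  then have UV: "\<And>n. n \<in> N \<Longrightarrow> open (U n) \<and> open (V n) \<and> q \<in> U n \<and> n \<in> V n \<and> U n \<inter> V n = {}"
    by blast
  have cov: "N \<subseteq> (\<Union>n\<in>N. V n)" using UV by auto
  obtain N' where N': "N' \<subseteq> N" "finite N'" "N \<subseteq> (\<Union>n\<in>N'. V n)"
    by (rule compactE_image[OF assms(1), of N V]) (use UV cov in auto)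
  define U0 where "U0 = (\<Inter>n\<in>N'. U n)"
  define V0 where "V0 = (\<Union>n\<in>N'. V n)"
  have "open U0" unfolding U0_def using N' UV by (intro open_INT) auto
  have "open V0" unfolding V0_def using N' UV by (intro open_UN) auto
  have "q \<in> U0" unfolding U0_def using N' UV by auto
  have "U0 \<inter> V0 = {}" unfolding U0_def V0_def using N' UV by fastforce
  then have "U0 \<subseteq> - V0" by auto
  then have "closure U0 \<subseteq> - V0" using \<open>open V0\<close> by (intro closure_minimal) auto
  moreover have "N \<subseteq> V0" using N' unfolding V0_def by simp
  ultimately have "closure U0 \<inter> N = {}" by blast
  with \<open>open U0\<close> \<open>q \<in> U0\<close> show ?thesis by blast
qed

lemma clopen_nbhd:
  fixes q :: "'a::t2_space"
  assumes cpt: "compact (UNIV :: 'a set)" and fin: "finite {x :: 'a. x islimpt UNIV}"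
    and "closed N" "q \<notin> N"
  shows "\<exists>C. open C \<and> closed C \<and> q \<in> C \<and> C \<inter> N = {}"
proof -
  define N' where "N' = N \<union> ({x. x islimpt UNIV} - {q})"
  have fq: "finite ({x. x islimpt UNIV} - {q})" using fin by simp
  have "closed N'" unfolding N'_def using closed_Un[OF assms(3) finite_imp_closed[OF fq]] by simp
  have "compact (UNIV \<inter> N')" by (rule compact_Int_closed[OF cpt \<open>closed N'\<close>])
  then have "compact N'" by simp
  have "q \<notin> N'" unfolding N'_def using assms(4) by simp
  obtain U where U: "open U" "q \<in> U" "closure U \<inter> N' = {}"
    using sep_point_compact[OF \<open>compact N'\<close> \<open>q \<notin> N'\<close>] by blast
  define Bd where "Bd = closure U - U"
  have "closed Bd" unfolding Bd_def using U(1) by (intro closed_Diff) simp_all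
  have "compact (UNIV \<inter> Bd)" by (rule compact_Int_closed[OF cpt \<open>closed Bd\<close>])
  then have "compact Bd" by simp
  have isoBd: "\<And>s. s \<in> Bd \<Longrightarrow> \<not> s islimpt UNIV"
  proof -
    fix s assume "s \<in> Bd"
    then have "s \<noteq> q" "s \<in> closure U" unfolding Bd_def using U(2) by blast+
    then have "s \<notin> N'" using U(3) by blast
    then show "\<not> s islimpt UNIV" using \<open>s \<noteq> q\<close> unfolding N'_def by simp
  qed
  have "open Bd"
  proof -
    have "Bd = (\<Union>s\<in>Bd. {s})" by simp
    moreover have "\<And>s. s \<in> Bd \<Longrightarrow> open {s}" using isoBd iso_open by blast
    ultimately show ?thesis by (metis open_UN)
  qed
  have "closure U = U \<union> Bd" unfolding Bd_def using closure_subset[of U] by blast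
  then have "open (closure U)" using open_Un[OF U(1) \<open>open Bd\<close>] by simp
  moreover have "closure U \<inter> N = {}" using U(3) unfolding N'_def by blast
  moreover have "q \<in> closure U" using U(2) closure_subset[of U] by blast
  ultimately show ?thesis by blast
qed

lemma clopen_sep:
  fixes P N :: "'a::t2_space set"
  assumes cpt: "compact (UNIV :: 'a set)" and fin: "finite {x :: 'a. x islimpt UNIV}"
    and "closed P" "closed N" "P \<inter> N = {}"
  shows "\<exists>C. open C \<and> closed C \<and> P \<subseteq> C \<and> C \<inter> N = {}"
proof -
  have "\<forall>q\<in>P. \<exists>C. open C \<and> closed C \<and> q \<in> C \<and> C \<inter> N = {}"
    using clopen_nbhd[OF cpt fin \<open>closed N\<close>] assms(5) by blast
  then obtain C where "\<forall>q\<in>P. open (C q) \<and> closed (C q) \<and> q \<in> C q \<and> C q \<inter> N = {}"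
    by (rule bchoice_elim)
  then have C: "\<And>q. q \<in> P \<Longrightarrow> open (C q) \<and> closed (C q) \<and> q \<in> C q \<and> C q \<inter> N = {}"
    by blast
  have "compact P" using cpt compact_Int_closed[of UNIV P] assms(3) by simp
  have cov: "P \<subseteq> (\<Union>q\<in>P. C q)" using C by auto
  obtain P' where P': "P' \<subseteq> P" "finite P'" "P \<subseteq> (\<Union>q\<in>P'. C q)"
    by (rule compactE_image[OF \<open>compact P\<close>, of P C]) (use C cov in auto)
  define D where "D = (\<Union>q\<in>P'. C q)"
  have "open D" unfolding D_def using P' C by (intro open_UN) auto
  moreover have "closed D" unfolding D_def using P' C by (intro closed_UN) auto
  moreover have "D \<inter> N = {}" unfolding D_def using P' C by auto
  ultimately show ?thesis using P' unfolding D_def by blast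
qed

lemma cont_bcontfun:
  fixes f :: "'a::topological_space \<Rightarrow> real"
  assumes cpt: "compact (UNIV :: 'a set)" and "continuous_on UNIV f"
  shows "apply_bcontfun (Bcontfun f) = f"
proof -
  have "compact (range f)" using compact_continuous_image[OF assms(2) cpt] .
  then have "bounded (range f)" by (rule compact_imp_bounded)
  then have "f \<in> bcontfun" using assms(2) unfolding bcontfun_def by auto
  then show ?thesis by (rule Bcontfun_inverse)
qed

lemma clopen_cont:
  fixes C :: "'a::topological_space set"
  assumes "open C" "closed C"
  shows "continuous_on UNIV (\<lambda>x. if x \<in> C then (c1::real) else c2)"
proof -
  have "continuous_on (C \<union> -C) (\<lambda>x. if x \<in> C then (c1::real) else c2)"
    using assms by (intro continuous_on_cases) auto
  moreover have "C \<union> -C = UNIV" by auto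
  ultimately show ?thesis by simp
qed



lemma dist_pt: "\<bar>apply_bcontfun f x - apply_bcontfun g x\<bar> \<le> dist f g"
  for f g :: "'a::topological_space \<Rightarrow>\<^sub>C real"
  using dist_bounded[of f x g] by (simp add: dist_real_def)

lemma dist_ptI: "(\<And>x. \<bar>apply_bcontfun f x - apply_bcontfun g x\<bar> \<le> r) \<Longrightarrow> dist f g \<le> r"
  for f g :: "'a::topological_space \<Rightarrow>\<^sub>C real"
  using dist_bound[of f g r] by (simp add: dist_real_def)

lemma norm_pt: "\<bar>apply_bcontfun f x\<bar> \<le> norm f"
  for f :: "'a::topological_space \<Rightarrow>\<^sub>C real"
  using norm_bounded[of f x] by simp

lemma norm_ptI: "(\<And>x. \<bar>apply_bcontfun f x\<bar> \<le> r) \<Longrightarrow> norm f \<le> r"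
  for f :: "'a::topological_space \<Rightarrow>\<^sub>C real"
  using norm_bound[of f r] by simp

locale plast =
  fixes F :: "('a::t2_space \<Rightarrow>\<^sub>C real) \<Rightarrow> ('a \<Rightarrow>\<^sub>C real)"
  assumes cpt: "compact (UNIV :: 'a set)"
    and fin: "finite {x :: 'a. x islimpt UNIV}"
    and bij: "bij_betw F {f. norm f \<le> 1} {f. norm f \<le> 1}"
    and ne: "\<forall>f \<in> {f. norm f \<le> 1}. \<forall>g \<in> {f. norm f \<le> 1}. dist (F f) (F g) \<le> dist f g"
begin

definition e :: "'a \<Rightarrow> ('a \<Rightarrow>\<^sub>C real)" where
  "e a = Bcontfun (\<lambda>s. if s \<in> {a} then 1 else 0)"

lemma e_apply: "\<not> a islimpt UNIV \<Longrightarrow> apply_bcontfun (e a) s = (if s = a then 1 else 0)"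
  unfolding e_def
  using cont_bcontfun[OF cpt clopen_cont[OF iso_open closed_singleton]] by simp

lemma norm_e: "\<not> a islimpt UNIV \<Longrightarrow> norm (e a) \<le> 1"
  by (rule norm_ptI) (simp add: e_apply)

lemma FB: "norm x \<le> 1 \<Longrightarrow> norm (F x) \<le> 1"
  using bij unfolding bij_betw_def by auto

lemma Finj: "norm x \<le> 1 \<Longrightarrow> norm y \<le> 1 \<Longrightarrow> F x = F y \<Longrightarrow> x = y"
  using bij unfolding bij_betw_def inj_on_def by auto

lemma Fsurj: "norm y \<le> 1 \<Longrightarrow> \<exists>x. norm x \<le> 1 \<and> F x = y"
  using bij unfolding bij_betw_def by (metis (mono_tags, lifting) imageE mem_Collect_eq)

lemma Fne: "norm x \<le> 1 \<Longrightarrow> norm y \<le> 1 \<Longrightarrow> dist (F x) (F y) \<le> dist x y"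
  using ne by auto

lemma Fpt: "norm x \<le> 1 \<Longrightarrow> norm y \<le> 1 \<Longrightarrow> \<bar>F x s - F y s\<bar> \<le> dist x y"
  using dist_pt[of "F x" s "F y"] Fne[of x y] by linarith

lemma F0: "F 0 = 0"
proof (rule ccontr)
  assume "F 0 \<noteq> 0"
  define c where "c = F 0"
  have "c \<noteq> 0" using \<open>F 0 \<noteq> 0\<close> c_def by simp
  then have nc: "norm c > 0" by simp
  define y where "y = (- 1 / norm c) *\<^sub>R c"
  have "norm y = 1" unfolding y_def using nc by simp
  then obtain z where z: "norm z \<le> 1" "F z = y" using Fsurj[of y] by auto
  have "dist (F z) (F 0) \<le> dist z 0" using Fne[of z 0] z by simp
  also have "\<dots> \<le> 1" using z by simp
  finally have d1: "dist y c \<le> 1" using z c_def by simp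
  have yc: "y - c = (- (1 / norm c + 1)) *\<^sub>R c" unfolding y_def by (simp add: algebra_simps)
  have "dist y c = norm ((- (1 / norm c + 1)) *\<^sub>R c)" using yc by (simp add: dist_norm)
  also have "\<dots> = \<bar>1 / norm c + 1\<bar> * norm c" by (simp only: norm_scaleR abs_minus_cancel)
  also have "\<bar>1 / norm c + 1\<bar> = 1 / norm c + 1" using nc by simp
  finally have "dist y c = (1 / norm c + 1) * norm c" .
  then have "dist y c = 1 + norm c" using nc by (simp add: field_simps)
  with d1 nc show False by simp
qed

lemma Fnorm: "norm x \<le> 1 \<Longrightarrow> norm (F x) \<le> norm x"
  using Fne[of x 0] F0 by (simp add: dist_norm)

lemma nonzero_iso:
  fixes c :: "'a \<Rightarrow>\<^sub>C real"
  assumes "c \<noteq> 0" shows "\<exists>s. \<not> s islimpt UNIV \<and> c s \<noteq> 0"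
proof -
  have "\<exists>x. c x \<noteq> 0" using assms bcontfun_eqI[of c 0] by auto
  then have ne: "{x. c x \<noteq> 0} \<noteq> {}" by auto
  have op: "open {x. c x \<noteq> 0}"
    by (rule open_Collect_neq) (auto intro: continuous_on_const)
  show ?thesis using iso_dense[OF fin op ne] by auto
qed

lemma supp_one:
  fixes c :: "'a \<Rightarrow>\<^sub>C real"
  assumes "\<not> b islimpt UNIV" "\<And>s. \<not> s islimpt UNIV \<Longrightarrow> s \<noteq> b \<Longrightarrow> c s = 0"
  shows "\<And>s. s \<noteq> b \<Longrightarrow> c s = 0"
proof -
  have "apply_bcontfun c = (\<lambda>s. if s \<in> {b} then c b else 0)"
    by (rule iso_eq[OF fin]) (use assms clopen_cont[OF iso_open[OF assms(1)] closed_singleton] in auto)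
  then show "\<And>s. s \<noteq> b \<Longrightarrow> c s = 0" by (metis singletonD)
qed

lemma two_pt:
  assumes "\<not> s1 islimpt UNIV" "\<not> s2 islimpt UNIV" "s1 \<noteq> s2" "\<bar>u\<bar> \<le> 1" "\<bar>v\<bar> \<le> 1"
  shows "norm (u *\<^sub>R e s1 + v *\<^sub>R e s2) \<le> 1"
    "apply_bcontfun (u *\<^sub>R e s1 + v *\<^sub>R e s2) s1 = u"
    "apply_bcontfun (u *\<^sub>R e s1 + v *\<^sub>R e s2) s2 = v"
proof -
  show "norm (u *\<^sub>R e s1 + v *\<^sub>R e s2) \<le> 1"
    by (rule norm_ptI) (use assms in \<open>simp add: e_apply\<close>)
  show "apply_bcontfun (u *\<^sub>R e s1 + v *\<^sub>R e s2) s1 = u"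
    using assms by (simp add: e_apply)
  show "apply_bcontfun (u *\<^sub>R e s1 + v *\<^sub>R e s2) s2 = v"
    using assms by (simp add: e_apply)
qed

lemma far_sgn: "c \<noteq> 0 \<Longrightarrow> \<bar>- sgn c - c\<bar> > (1::real)"
  by (cases "c > 0") (auto simp: sgn_if)

lemma cov:
  fixes c1 c2 :: "'a \<Rightarrow>\<^sub>C real"
  assumes "c1 \<noteq> 0" "c2 \<noteq> 0"
    and cover: "\<And>w. norm w \<le> 1 \<Longrightarrow> dist w c1 \<le> 1 \<or> dist w c2 \<le> 1"
  shows "\<exists>b. \<not> b islimpt UNIV \<and> (\<forall>s. s \<noteq> b \<longrightarrow> c1 s = 0 \<and> c2 s = 0) \<and> c1 b * c2 b < 0"
proof -
  have sg: "\<bar>- sgn x\<bar> \<le> 1" for x :: real by (simp add: sgn_if)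
  have C2: False if "\<not> s1 islimpt UNIV" "\<not> s2 islimpt UNIV" "s1 \<noteq> s2" "c1 s1 \<noteq> 0" "c2 s2 \<noteq> 0" for s1 s2
  proof -
    define w where "w = (- sgn (c1 s1)) *\<^sub>R e s1 + (- sgn (c2 s2)) *\<^sub>R e s2"
    note tp = two_pt[OF that(1-3) sg sg, of "c1 s1" "c2 s2"]
    have w: "norm w \<le> 1" "w s1 = - sgn (c1 s1)" "w s2 = - sgn (c2 s2)"
      unfolding w_def using tp by blast+
    have "dist w c1 > 1" using dist_pt[of w s1 c1] far_sgn[OF that(4)] w(2) by linarith
    moreover have "dist w c2 > 1" using dist_pt[of w s2 c2] far_sgn[OF that(5)] w(3) by linarith
    ultimately show False using cover[OF w(1)] by linarith
  qed
  have C3: False if "\<not> s islimpt UNIV" "c1 s * c2 s > 0" for s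
  proof -
    define w where "w = (- sgn (c1 s)) *\<^sub>R e s"
    have "norm w = \<bar>- sgn (c1 s)\<bar> * norm (e s)" unfolding w_def by (simp only: norm_scaleR)
    also have "\<dots> \<le> 1 * 1" by (rule mult_mono[OF sg norm_e[OF that(1)]]) simp_all
    finally have w1: "norm w \<le> 1" by simp
    have w2: "w s = - sgn (c1 s)" unfolding w_def using e_apply[OF that(1)] by simp
    have nz: "c1 s \<noteq> 0" "c2 s \<noteq> 0" using that(2) by auto
    have "sgn (c1 s) = sgn (c2 s)" using that(2)
      by (cases "c1 s > 0"; cases "c2 s > 0") (auto simp: sgn_if mult_less_0_iff zero_less_mult_iff)
    then have w3: "w s = - sgn (c2 s)" using w2 by simp
    have "dist w c1 > 1" using dist_pt[of w s c1] far_sgn[OF nz(1)] w2 by linarith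
    moreover have "dist w c2 > 1" using dist_pt[of w s c2] far_sgn[OF nz(2)] w3 by linarith
    ultimately show False using cover[OF w1] by linarith
  qed
  obtain b where b: "\<not> b islimpt UNIV" "c1 b \<noteq> 0" using nonzero_iso[OF assms(1)] by blast
  obtain s2 where s2: "\<not> s2 islimpt UNIV" "c2 s2 \<noteq> 0" using nonzero_iso[OF assms(2)] by blast
  have "s2 = b" using C2[OF b(1) s2(1) _ b(2) s2(2)] by blast
  then have b2: "c2 b \<noteq> 0" using s2 by simp
  have i1: "c1 s = 0" if "\<not> s islimpt UNIV" "s \<noteq> b" for s
  proof (rule ccontr)
    assume "c1 s \<noteq> 0"
    show False by (rule C2[OF that(1) b(1) that(2) \<open>c1 s \<noteq> 0\<close> b2])
  qed
  have i2: "c2 s = 0" if "\<not> s islimpt UNIV" "s \<noteq> b" for s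
  proof (rule ccontr)
    assume "c2 s \<noteq> 0"
    have "b \<noteq> s" using that(2) by simp
    show False by (rule C2[OF b(1) that(1) \<open>b \<noteq> s\<close> b(2) \<open>c2 s \<noteq> 0\<close>])
  qed
  have z1: "c1 s = 0" if "s \<noteq> b" for s
    by (rule supp_one[OF b(1) i1 that])
  have z2: "c2 s = 0" if "s \<noteq> b" for s
    by (rule supp_one[OF b(1) i2 that])
  have "c1 b * c2 b \<noteq> 0" using b(2) b2 by simp
  have "c1 b * c2 b < 0"
  proof (rule ccontr)
    assume "\<not> c1 b * c2 b < 0"
    then have "c1 b * c2 b > 0" using \<open>c1 b * c2 b \<noteq> 0\<close> by linarith
    then show False by (rule C3[OF b(1)])
  qed
  then show ?thesis using b(1) z1 z2 by (intro exI[of _ b] conjI allI impI) simp_all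
qed

lemma te_apply: "\<not> a islimpt UNIV \<Longrightarrow> apply_bcontfun (t *\<^sub>R e a) s = (if s = a then t else 0)"
  by (simp add: e_apply)

lemma te_norm: "\<not> a islimpt UNIV \<Longrightarrow> \<bar>t\<bar> \<le> 1 \<Longrightarrow> norm (t *\<^sub>R e a) \<le> 1"
  by (rule norm_ptI) (simp add: e_apply)

lemma te_dist: "\<not> a islimpt UNIV \<Longrightarrow> dist (s *\<^sub>R e a) (t *\<^sub>R e a) \<le> \<bar>s - t\<bar>"
  by (rule dist_ptI) (simp add: e_apply)

lemma te_Fpt: "\<not> a islimpt UNIV \<Longrightarrow> \<bar>s\<bar> \<le> 1 \<Longrightarrow> \<bar>t\<bar> \<le> 1 \<Longrightarrow>
   \<bar>F (s *\<^sub>R e a) x - F (t *\<^sub>R e a) x\<bar> \<le> \<bar>s - t\<bar>"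
  using Fpt[OF te_norm te_norm, of a s a t x] te_dist[of a s t] by linarith

lemma ray_cont:
  assumes "\<not> a islimpt UNIV" "\<bar>k\<bar> \<le> 1"
  shows "continuous_on {0..1} (\<lambda>t. F ((k * t) *\<^sub>R e a) b)"
  unfolding continuous_on_iff
proof (intro ballI allI impI)
  fix x :: real and d :: real assume x: "x \<in> {0..1}" and "d > 0"
  show "\<exists>d'>0. \<forall>x'\<in>{0..1}. dist x' x < d' \<longrightarrow> dist (F ((k * x') *\<^sub>R e a) b) (F ((k * x) *\<^sub>R e a) b) < d"
  proof (intro exI[of _ d] conjI ballI impI)
    show "d > 0" by fact
    fix x' :: real assume x': "x' \<in> {0..1}" and "dist x' x < d"
    have b1: "\<bar>k * x'\<bar> \<le> 1" using x' assms(2) by (simp add: abs_mult mult_le_one)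
    have b2: "\<bar>k * x\<bar> \<le> 1" using x assms(2) by (simp add: abs_mult mult_le_one)
    have "\<bar>F ((k * x') *\<^sub>R e a) b - F ((k * x) *\<^sub>R e a) b\<bar> \<le> \<bar>k * x' - k * x\<bar>"
      by (rule te_Fpt[OF assms(1) b1 b2])
    also have "\<dots> = \<bar>k\<bar> * \<bar>x' - x\<bar>" by (simp add: abs_mult right_diff_distrib[symmetric])
    also have "\<dots> \<le> \<bar>x' - x\<bar>" using assms(2) by (simp add: mult_left_le_one_le)
    finally show "dist (F ((k * x') *\<^sub>R e a) b) (F ((k * x) *\<^sub>R e a) b) < d"
      using \<open>dist x' x < d\<close> by (simp add: dist_real_def)
  qed
qed

lemma F_te_nz:
  assumes "\<not> a islimpt UNIV" "t \<noteq> 0" "\<bar>t\<bar> \<le> 1"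
  shows "F (t *\<^sub>R e a) \<noteq> 0"
proof
  assume "F (t *\<^sub>R e a) = 0"
  then have "F (t *\<^sub>R e a) = F 0" by (simp add: F0)
  then have "t *\<^sub>R e a = 0" using Finj[OF te_norm[OF assms(1,3)], of 0] by simp
  then have "apply_bcontfun (t *\<^sub>R e a) a = apply_bcontfun 0 a" by (simp only:)
  moreover have "apply_bcontfun (t *\<^sub>R e a) a = t" using assms(1) by (simp add: e_apply)
  ultimately show False using assms(2) by simp
qed

lemma D1:
  assumes a: "\<not> a islimpt UNIV" and t: "0 < t" "t \<le> 1"
  shows "\<exists>b. \<not> b islimpt UNIV \<and> (\<forall>s. s \<noteq> b \<longrightarrow> F (t *\<^sub>R e a) s = 0 \<and> F ((-t) *\<^sub>R e a) s = 0)
           \<and> F (t *\<^sub>R e a) b * F ((-t) *\<^sub>R e a) b < 0"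
proof (rule cov)
  show "F (t *\<^sub>R e a) \<noteq> 0" by (rule F_te_nz[OF a]) (use t in auto)
  show "F ((-t) *\<^sub>R e a) \<noteq> 0" by (rule F_te_nz[OF a]) (use t in auto)
  fix w :: "'a \<Rightarrow>\<^sub>C real" assume "norm w \<le> 1"
  then obtain z where z: "norm z \<le> 1" "F z = w" using Fsurj by blast
  have tn1: "norm (t *\<^sub>R e a) \<le> 1" "norm ((-t) *\<^sub>R e a) \<le> 1"
    by (rule te_norm[OF a], use t in simp)+
  have zb: "\<bar>z x\<bar> \<le> 1" for x using norm_pt[of z x] z(1) by linarith
  show "dist w (F (t *\<^sub>R e a)) \<le> 1 \<or> dist w (F ((-t) *\<^sub>R e a)) \<le> 1"
  proof (cases "z a \<ge> 0")
    case True
    have "dist z (t *\<^sub>R e a) \<le> 1"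
    proof (rule dist_ptI)
      fix x show "\<bar>z x - (t *\<^sub>R e a) x\<bar> \<le> 1"
        using zb[of x] True t by (cases "x = a") (auto simp: e_apply a abs_le_iff field_simps)
    qed
    then have "dist w (F (t *\<^sub>R e a)) \<le> 1" using Fne[OF z(1) tn1(1)] z(2) by (metis order.trans)
    then show ?thesis by simp
  next
    case False
    have "dist z ((-t) *\<^sub>R e a) \<le> 1"
    proof (rule dist_ptI)
      fix x show "\<bar>z x - ((-t) *\<^sub>R e a) x\<bar> \<le> 1"
        using zb[of x] False t by (cases "x = a") (auto simp: e_apply a abs_le_iff field_simps)
    qed
    then have "dist w (F ((-t) *\<^sub>R e a)) \<le> 1" using Fne[OF z(1) tn1(2)] z(2) by (metis order.trans)
    then show ?thesis by simp
  qed
qed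

lemma neg_of_prod: "(x::real) > 0 \<Longrightarrow> x * y < 0 \<Longrightarrow> y < 0"
  by (auto simp: mult_less_0_iff)

lemma supp_val:
  assumes "\<forall>s. s \<noteq> b \<longrightarrow> apply_bcontfun c s = 0" "apply_bcontfun c x \<noteq> 0"
  shows "x = b"
  using assms by blast

lemma D2:
  assumes a: "\<not> a islimpt UNIV"
  shows "\<exists>b \<beta>. \<not> b islimpt UNIV \<and> (\<beta> = 1 \<or> \<beta> = -1) \<and>
     (\<forall>t. 0 < t \<and> t \<le> 1 \<longrightarrow> (\<forall>s. s \<noteq> b \<longrightarrow> F (t *\<^sub>R e a) s = 0 \<and> F ((-t) *\<^sub>R e a) s = 0)
        \<and> \<beta> * F (t *\<^sub>R e a) b > 0 \<and> \<beta> * F ((-t) *\<^sub>R e a) b < 0)"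
proof -
  obtain b1 where b1: "\<not> b1 islimpt UNIV" "\<forall>s. s \<noteq> b1 \<longrightarrow> F (1 *\<^sub>R e a) s = 0 \<and> F ((-1) *\<^sub>R e a) s = 0"
     "F (1 *\<^sub>R e a) b1 * F ((-1) *\<^sub>R e a) b1 < 0"
    using D1[OF a, of 1] by auto
  define c1 where "c1 = F (1 *\<^sub>R e a) b1"
  have "c1 \<noteq> 0" using b1(3) c1_def by auto
  define \<beta> :: real where "\<beta> = (if c1 > 0 then 1 else -1)"
  have \<beta>: "\<beta> = 1 \<or> \<beta> = -1" "\<beta> * \<beta> = 1" "\<beta> * c1 > 0" using \<open>c1 \<noteq> 0\<close> unfolding \<beta>_def by auto
  define h where "h t = \<beta> * F (t *\<^sub>R e a) b1" for t
  have hc: "continuous_on {0..1} h"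
    unfolding h_def using ray_cont[OF a, of 1 b1] by (intro continuous_on_mult_left) simp
  define Z where "Z = {0..1} \<inter> h -` {..0}"
  have "closed Z" unfolding Z_def by (rule continuous_closed_preimage[OF hc]) auto
  have h0: "h 0 = 0" unfolding h_def using F0 by simp
  then have "0 \<in> Z" unfolding Z_def by simp
  have bdd: "bdd_above Z" unfolding Z_def by (rule bdd_aboveI[of _ 1]) auto
  define t0 where "t0 = Sup Z"
  have "t0 \<in> Z" unfolding t0_def using closed_contains_Sup[OF _ bdd \<open>closed Z\<close>] \<open>0 \<in> Z\<close> by blast
  have "0 \<le> t0" unfolding t0_def using cSup_upper[OF \<open>0 \<in> Z\<close> bdd] .
  have ht0: "h t0 \<le> 0" "t0 \<le> 1" using \<open>t0 \<in> Z\<close> unfolding Z_def by auto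
  have pos: "h t > 0" if "t0 < t" "t \<le> 1" for t
  proof (rule ccontr)
    assume "\<not> h t > 0"
    then have "t \<in> Z" unfolding Z_def using that \<open>0 \<le> t0\<close> by auto
    then have "t \<le> t0" unfolding t0_def using cSup_upper[OF _ bdd] by blast
    with that show False by simp
  qed
  have supp_t: "\<forall>s. s \<noteq> b1 \<longrightarrow> F (t *\<^sub>R e a) s = 0 \<and> F ((-t) *\<^sub>R e a) s = 0"
     and prod_t: "F (t *\<^sub>R e a) b1 * F ((-t) *\<^sub>R e a) b1 < 0"
    if tt: "0 < t" "t \<le> 1" "h t > 0" for t
  proof -
    obtain bt where bt: "\<not> bt islimpt UNIV" "\<forall>s. s \<noteq> bt \<longrightarrow> F (t *\<^sub>R e a) s = 0 \<and> F ((-t) *\<^sub>R e a) s = 0"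
       "F (t *\<^sub>R e a) bt * F ((-t) *\<^sub>R e a) bt < 0"
      using D1[OF a tt(1,2)] by blast
    have "F (t *\<^sub>R e a) b1 \<noteq> 0" using tt(3) unfolding h_def by auto
    then have "b1 = bt" using bt(2) by blast
    then show "\<forall>s. s \<noteq> b1 \<longrightarrow> F (t *\<^sub>R e a) s = 0 \<and> F ((-t) *\<^sub>R e a) s = 0"
       "F (t *\<^sub>R e a) b1 * F ((-t) *\<^sub>R e a) b1 < 0" using bt by simp_all
  qed
  have "t0 = 0"
  proof (rule ccontr)
    assume "t0 \<noteq> 0"
    then have t0p: "0 < t0" using \<open>0 \<le> t0\<close> by simp
    have "h 1 > 0" unfolding h_def using \<beta>(3) c1_def by simp
    then have "t0 \<noteq> 1" using ht0(1) by auto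
    then have "t0 < 1" using ht0(2) by simp
    obtain b0 where b0: "\<not> b0 islimpt UNIV" "\<forall>s. s \<noteq> b0 \<longrightarrow> F (t0 *\<^sub>R e a) s = 0 \<and> F ((-t0) *\<^sub>R e a) s = 0"
       "F (t0 *\<^sub>R e a) b0 * F ((-t0) *\<^sub>R e a) b0 < 0"
      using D1[OF a t0p ht0(2)] by blast
    define l where "l = F (t0 *\<^sub>R e a) b0"
    have "l \<noteq> 0" using b0(3) l_def by auto
    have bound: "\<bar>l\<bar> \<le> t - t0" if tt: "t0 < t" "t \<le> 1" for t
    proof -
      have ht: "h t > 0" using pos[OF that] .
      have tp: "0 < t" using that t0p by simp
      have d: "\<bar>F (t0 *\<^sub>R e a) x - F (t *\<^sub>R e a) x\<bar> \<le> t - t0" for x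
        using te_Fpt[OF a, of t0 t x] ht0(2) that t0p by simp
      show ?thesis
      proof (cases "b0 = b1")
        case False
        then have "F (t *\<^sub>R e a) b0 = 0" using supp_t[OF tp tt(2) ht] by blast
        then show ?thesis using d[of b0] l_def by simp
      next
        case True
        have "\<beta> * l \<le> 0" using ht0(1) True unfolding h_def l_def by simp
        moreover have "\<beta> * F (t *\<^sub>R e a) b1 > 0" using ht unfolding h_def by simp
        ultimately have "\<bar>l\<bar> \<le> \<bar>l - F (t *\<^sub>R e a) b1\<bar>" using \<beta>(1)
          by (auto simp: abs_if)
        then show ?thesis using d[of b1] l_def True by simp
      qed
    qed
    define m where "m = min \<bar>l\<bar> (1 - t0)"
    have m: "0 < m" "m \<le> 1 - t0" "m \<le> \<bar>l\<bar>" using \<open>l \<noteq> 0\<close> \<open>t0 < 1\<close> unfolding m_def by auto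
    define t where "t = t0 + m / 2"
    have "t0 < t" "t \<le> 1" unfolding t_def using m by linarith+
    from bound[OF this] have "\<bar>l\<bar> \<le> m / 2" unfolding t_def by simp
    with m show False by linarith
  qed
  show ?thesis
  proof (intro exI[of _ b1] exI[of _ \<beta>] conjI allI impI)
    show "\<not> b1 islimpt UNIV" by (rule b1(1))
    show "\<beta> = 1 \<or> \<beta> = -1" by (rule \<beta>(1))
    fix t :: real assume t: "0 < t \<and> t \<le> 1"
    then have ht: "h t > 0" using pos \<open>t0 = 0\<close> by simp
    note st = supp_t[OF conjunct1[OF t] conjunct2[OF t] ht]
    note pt = prod_t[OF conjunct1[OF t] conjunct2[OF t] ht]
    fix s assume "s \<noteq> b1"
    then show "F (t *\<^sub>R e a) s = 0" "F ((-t) *\<^sub>R e a) s = 0" using st by simp_all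
  next
    fix t :: real assume t: "0 < t \<and> t \<le> 1"
    then have ht: "h t > 0" using pos \<open>t0 = 0\<close> by simp
    then show "\<beta> * F (t *\<^sub>R e a) b1 > 0" unfolding h_def .
  next
    fix t :: real assume t: "0 < t \<and> t \<le> 1"
    then have ht: "h t > 0" using pos \<open>t0 = 0\<close> by simp
    note pt = prod_t[OF conjunct1[OF t] conjunct2[OF t] ht]
    have "(\<beta> * F (t *\<^sub>R e a) b1) * (\<beta> * F ((-t) *\<^sub>R e a) b1) = F (t *\<^sub>R e a) b1 * F ((-t) *\<^sub>R e a) b1"
    proof -
      have "(\<beta> * F (t *\<^sub>R e a) b1) * (\<beta> * F ((-t) *\<^sub>R e a) b1) = (\<beta> * \<beta>) * (F (t *\<^sub>R e a) b1 * F ((-t) *\<^sub>R e a) b1)"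
        by (simp only: ac_simps)
      then show ?thesis using \<beta>(2) by (simp only: mult_1)
    qed
    then have "(\<beta> * F (t *\<^sub>R e a) b1) * (\<beta> * F ((-t) *\<^sub>R e a) b1) < 0" using pt by (simp only:)
    moreover have "\<beta> * F (t *\<^sub>R e a) b1 > 0" using ht unfolding h_def .
    ultimately show "\<beta> * F ((-t) *\<^sub>R e a) b1 < 0" using neg_of_prod by blast
  qed
qed

definition good :: "'a \<Rightarrow> 'a \<Rightarrow> real \<Rightarrow> bool" where
  "good a b \<beta> \<longleftrightarrow> \<not> b islimpt UNIV \<and> (\<beta> = 1 \<or> \<beta> = -1) \<and>
     (\<forall>t. 0 < t \<and> t \<le> 1 \<longrightarrow> (\<forall>s. s \<noteq> b \<longrightarrow> F (t *\<^sub>R e a) s = 0 \<and> F ((-t) *\<^sub>R e a) s = 0)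
        \<and> \<beta> * F (t *\<^sub>R e a) b > 0 \<and> \<beta> * F ((-t) *\<^sub>R e a) b < 0)"

definition sig :: "'a \<Rightarrow> 'a" where "sig a = (SOME b. \<exists>\<beta>. good a b \<beta>)"
definition bet :: "'a \<Rightarrow> real" where "bet a = (SOME \<beta>. good a (sig a) \<beta>)"

lemma good_sig: assumes "\<not> a islimpt UNIV" shows "good a (sig a) (bet a)"
proof -
  have "\<exists>b \<beta>. good a b \<beta>" using D2[OF assms] unfolding good_def by blast
  then have "\<exists>\<beta>. good a (sig a) \<beta>" unfolding sig_def by (rule someI_ex)
  then show ?thesis unfolding bet_def by (rule someI_ex)
qed

lemma sig_iso: "\<not> a islimpt UNIV \<Longrightarrow> \<not> sig a islimpt UNIV"
  using good_sig unfolding good_def by blast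

lemma bet_pm: "\<not> a islimpt UNIV \<Longrightarrow> bet a = 1 \<or> bet a = -1"
  using good_sig unfolding good_def by blast

lemma bet_sq: "\<not> a islimpt UNIV \<Longrightarrow> bet a * bet a = 1"
  using bet_pm by fastforce

lemma ray_good:
  assumes a: "\<not> a islimpt UNIV" and k: "k = 1 \<or> k = -1" and t: "0 < t" "t \<le> 1"
  shows "\<forall>s. s \<noteq> sig a \<longrightarrow> F ((k * t) *\<^sub>R e a) s = 0"
    "(k * bet a) * F ((k * t) *\<^sub>R e a) (sig a) > 0"
proof -
  have g: "\<forall>s. s \<noteq> sig a \<longrightarrow> F (t *\<^sub>R e a) s = 0 \<and> F ((-t) *\<^sub>R e a) s = 0"
    "bet a * F (t *\<^sub>R e a) (sig a) > 0" "bet a * F ((-t) *\<^sub>R e a) (sig a) < 0"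
    using good_sig[OF a] t unfolding good_def by blast+
  show "\<forall>s. s \<noteq> sig a \<longrightarrow> F ((k * t) *\<^sub>R e a) s = 0"
    using k g(1) by (elim disjE) simp_all
  show "(k * bet a) * F ((k * t) *\<^sub>R e a) (sig a) > 0"
    using k g(2,3) by (elim disjE) simp_all
qed

lemma face:
  assumes a: "\<not> a islimpt UNIV" and z: "norm z \<le> 1"
  shows "F z (sig a) = - bet a \<Longrightarrow> z a = -1" "F z (sig a) = bet a \<Longrightarrow> z a = 1"
proof -
  have zb: "\<bar>z x\<bar> \<le> 1" for x using norm_pt[of z x] z by linarith
  have bb: "bet a = 1 \<or> bet a = -1" by (rule bet_pm[OF a])
  show "z a = -1" if hz: "F z (sig a) = - bet a"
  proof (rule ccontr)
    assume "z a \<noteq> -1"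
    then have za: "z a > -1" using zb[of a] by simp
    define t where "t = (z a + 1) / 2"
    have t: "0 < t" "t \<le> 1" unfolding t_def using za zb[of a] by simp_all
    have pos: "bet a * F (t *\<^sub>R e a) (sig a) > 0" using ray_good(2)[OF a _ t, of 1] by simp
    have "dist z (t *\<^sub>R e a) \<le> 1"
    proof (rule dist_ptI)
      fix x show "\<bar>z x - (t *\<^sub>R e a) x\<bar> \<le> 1"
        using zb[of x] zb[of a] unfolding t_def by (cases "x = a") (auto simp: e_apply a abs_le_iff field_simps)
    qed
    then have "\<bar>F z (sig a) - F (t *\<^sub>R e a) (sig a)\<bar> \<le> 1"
      using Fpt[OF z te_norm[OF a], of t "sig a"] t by simp
    then show False using hz pos bb by (elim disjE) (simp_all add: abs_if split: if_splits)
  qed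
  show "z a = 1" if hz: "F z (sig a) = bet a"
  proof (rule ccontr)
    assume "z a \<noteq> 1"
    then have za: "z a < 1" using zb[of a] by simp
    define t where "t = (1 - z a) / 2"
    have t: "0 < t" "t \<le> 1" unfolding t_def using za zb[of a] by simp_all
    have pos: "- bet a * F ((-t) *\<^sub>R e a) (sig a) > 0" using ray_good(2)[OF a _ t, of "-1"] by simp
    have "dist z ((-t) *\<^sub>R e a) \<le> 1"
    proof (rule dist_ptI)
      fix x show "\<bar>z x - ((-t) *\<^sub>R e a) x\<bar> \<le> 1"
        using zb[of x] zb[of a] unfolding t_def by (cases "x = a") (auto simp: e_apply a abs_le_iff field_simps)
    qed
    then have "\<bar>F z (sig a) - F ((-t) *\<^sub>R e a) (sig a)\<bar> \<le> 1"
      using Fpt[OF z te_norm[OF a], of "-t" "sig a"] t by simp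
    then show False using hz pos bb by (elim disjE) (simp_all add: abs_if split: if_splits)
  qed
qed

lemma ext_val:
  assumes a: "\<not> a islimpt UNIV" and x: "norm x \<le> 1" and y: "\<And>s. \<bar>F x s\<bar> = 1"
  shows "x a = bet a * F x (sig a)"
proof -
  have bb: "bet a = 1 \<or> bet a = -1" by (rule bet_pm[OF a])
  have "F x (sig a) = 1 \<or> F x (sig a) = -1" using y[of "sig a"] by (simp add: abs_if split: if_splits)
  then show ?thesis using bb face[OF a x] by (elim disjE) simp_all
qed

lemma ext_abs:
  assumes x: "norm x \<le> 1" and y: "\<And>s. \<bar>F x s\<bar> = 1"
  shows "\<bar>x s\<bar> = 1"
proof -
  have "(\<lambda>s. \<bar>apply_bcontfun x s\<bar>) = (\<lambda>s. 1)"
  proof (rule iso_eq[OF fin])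
    show "continuous_on UNIV (\<lambda>s. \<bar>apply_bcontfun x s\<bar>)" by (intro continuous_intros) simp
    show "continuous_on UNIV (\<lambda>s. 1::real)" by (intro continuous_intros)
    fix a :: 'a assume a: "\<not> a islimpt UNIV"
    show "\<bar>apply_bcontfun x a\<bar> = 1"
      using ext_val[OF a x y] y[of "sig a"] bet_pm[OF a] by (auto simp: abs_mult)
  qed
  then show ?thesis by metis
qed

lemma sig_inj:
  assumes a1: "\<not> a1 islimpt UNIV" and a2: "\<not> a2 islimpt UNIV" and eq: "sig a1 = sig a2"
  shows "a1 = a2"
proof (rule ccontr)
  assume ne: "a1 \<noteq> a2"
  define b where "b = sig a1"
  define r1 where "r1 t = F ((bet a1 * t) *\<^sub>R e a1) b" for t
  define r2 where "r2 t = F ((bet a2 * t) *\<^sub>R e a2) b" for t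
  have bb1: "bet a1 = 1 \<or> bet a1 = -1" by (rule bet_pm[OF a1])
  have bb2: "bet a2 = 1 \<or> bet a2 = -1" by (rule bet_pm[OF a2])
  have c1: "continuous_on {0..1} r1" unfolding r1_def by (rule ray_cont[OF a1]) (use bb1 in auto)
  have c2: "continuous_on {0..1} r2" unfolding r2_def by (rule ray_cont[OF a2]) (use bb2 in auto)
  have r10: "r1 0 = 0" "r2 0 = 0" unfolding r1_def r2_def using F0 by simp_all
  have p1: "r1 t > 0" "\<forall>s. s \<noteq> b \<longrightarrow> F ((bet a1 * t) *\<^sub>R e a1) s = 0" if "0 < t" "t \<le> 1" for t
    using ray_good[OF a1 bb1 that] bet_sq[OF a1] unfolding r1_def b_def by simp_all
  have p2: "r2 t > 0" "\<forall>s. s \<noteq> b \<longrightarrow> F ((bet a2 * t) *\<^sub>R e a2) s = 0" if "0 < t" "t \<le> 1" for t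
    using ray_good[OF a2 bb2 that] bet_sq[OF a2] eq unfolding r2_def b_def by simp_all
  define m where "m = min (r1 1) (r2 1)"
  have m: "0 < m" "m \<le> r1 1" "m \<le> r2 1" unfolding m_def using p1(1)[of 1] p2(1)[of 1] by simp_all
  obtain t1 where t1: "0 \<le> t1" "t1 \<le> 1" "r1 t1 = m"
    using IVT'[of r1 0 m 1] c1 r10 m by auto
  obtain t2 where t2: "0 \<le> t2" "t2 \<le> 1" "r2 t2 = m"
    using IVT'[of r2 0 m 1] c2 r10 m by auto
  have t1p: "0 < t1" using t1 r10 m by (cases "t1 = 0") auto
  have t2p: "0 < t2" using t2 r10 m by (cases "t2 = 0") auto
  have "F ((bet a1 * t1) *\<^sub>R e a1) = F ((bet a2 * t2) *\<^sub>R e a2)"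
  proof (rule bcontfun_eqI)
    fix s show "F ((bet a1 * t1) *\<^sub>R e a1) s = F ((bet a2 * t2) *\<^sub>R e a2) s"
      using p1(2)[OF t1p t1(2)] p2(2)[OF t2p t2(2)] t1(3) t2(3) unfolding r1_def r2_def
      by (cases "s = b") simp_all
  qed
  moreover have "norm ((bet a1 * t1) *\<^sub>R e a1) \<le> 1"
    by (rule te_norm[OF a1]) (use bb1 t1 in auto)
  moreover have "norm ((bet a2 * t2) *\<^sub>R e a2) \<le> 1"
    by (rule te_norm[OF a2]) (use bb2 t2 in auto)
  ultimately have "(bet a1 * t1) *\<^sub>R e a1 = (bet a2 * t2) *\<^sub>R e a2" using Finj by blast
  then have "apply_bcontfun ((bet a1 * t1) *\<^sub>R e a1) a1 = apply_bcontfun ((bet a2 * t2) *\<^sub>R e a2) a1"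
    by (simp only:)
  then have "bet a1 * t1 = 0" using ne a1 a2 by (simp add: e_apply)
  then show False using bb1 t1p by auto
qed

lemma const1: "norm (const_bcontfun (1::real) :: 'a \<Rightarrow>\<^sub>C real) \<le> 1"
  by (rule norm_ptI) simp

lemma sig_surj:
  assumes b0: "\<not> b0 islimpt UNIV"
  shows "\<exists>a. \<not> a islimpt UNIV \<and> sig a = b0"
proof (rule ccontr)
  assume nex: "\<not> ?thesis"
  define y1 :: "'a \<Rightarrow>\<^sub>C real" where "y1 = const_bcontfun 1"
  define y2 where "y2 = y1 - 2 *\<^sub>R e b0"
  have y1: "norm y1 \<le> 1" "\<And>s. \<bar>y1 s\<bar> = 1" unfolding y1_def using const1 by simp_all
  have y2: "norm y2 \<le> 1" "\<And>s. \<bar>y2 s\<bar> = 1" "y2 b0 = -1" "\<And>s. s \<noteq> b0 \<Longrightarrow> y2 s = 1"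
    unfolding y2_def y1_def by (auto intro!: norm_ptI simp: e_apply b0)
  obtain x1 where x1: "norm x1 \<le> 1" "F x1 = y1" using Fsurj[OF y1(1)] by blast
  obtain x2 where x2: "norm x2 \<le> 1" "F x2 = y2" using Fsurj[OF y2(1)] by blast
  have "apply_bcontfun x1 = apply_bcontfun x2"
  proof (rule iso_eq[OF fin])
    fix a :: 'a assume a: "\<not> a islimpt UNIV"
    have "sig a \<noteq> b0" using nex a by blast
    then show "x1 a = x2 a"
      using ext_val[OF a x1(1)] ext_val[OF a x2(1)] x1(2) x2(2) y1 y2 unfolding y1_def by simp
  qed simp_all
  then have "x1 = x2" by (simp add: bcontfun_eqI)
  then have "y1 = y2" using x1 x2 by simp
  then have "y1 b0 = y2 b0" by simp
  then show False using y2(3) unfolding y1_def by simp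
qed

definition xal :: "'a \<Rightarrow>\<^sub>C real" where "xal = (SOME x. norm x \<le> 1 \<and> F x = const_bcontfun 1)"

lemma xal: "norm xal \<le> 1" "F xal = const_bcontfun 1"
proof -
  have "\<exists>x. norm x \<le> 1 \<and> F x = const_bcontfun 1" using Fsurj[OF const1] by blast
  then have "norm xal \<le> 1 \<and> F xal = const_bcontfun 1" unfolding xal_def by (rule someI_ex)
  then show "norm xal \<le> 1" "F xal = const_bcontfun 1" by simp_all
qed

lemma xal_abs: "\<bar>xal s\<bar> = 1"
  by (rule ext_abs[OF xal(1)]) (simp add: xal(2))

lemma xal_iso: "\<not> a islimpt UNIV \<Longrightarrow> xal a = bet a"
  using ext_val[of a xal] xal by simp

definition uC :: "'a set \<Rightarrow> ('a \<Rightarrow>\<^sub>C real)" where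
  "uC C = Bcontfun (\<lambda>s. if s \<in> C then 1 else -1)"

lemma uC_apply: "open C \<Longrightarrow> closed C \<Longrightarrow> apply_bcontfun (uC C) s = (if s \<in> C then 1 else -1)"
  unfolding uC_def using cont_bcontfun[OF cpt clopen_cont] by simp

lemma uC_norm: "open C \<Longrightarrow> closed C \<Longrightarrow> norm (uC C) \<le> 1"
  by (rule norm_ptI) (simp add: uC_apply)

lemma uC_abs: "open C \<Longrightarrow> closed C \<Longrightarrow> \<bar>apply_bcontfun (uC C) s\<bar> = 1"
  by (simp add: uC_apply)

definition xC :: "'a set \<Rightarrow> ('a \<Rightarrow>\<^sub>C real)" where
  "xC C = (SOME x. norm x \<le> 1 \<and> F x = uC C)"

lemma xC: assumes "open C" "closed C" shows "norm (xC C) \<le> 1" "F (xC C) = uC C"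
proof -
  have "\<exists>x. norm x \<le> 1 \<and> F x = uC C" using Fsurj[OF uC_norm[OF assms]] by blast
  then have "norm (xC C) \<le> 1 \<and> F (xC C) = uC C" unfolding xC_def by (rule someI_ex)
  then show "norm (xC C) \<le> 1" "F (xC C) = uC C" by simp_all
qed

lemma xC_abs: "open C \<Longrightarrow> closed C \<Longrightarrow> \<bar>apply_bcontfun (xC C) s\<bar> = 1"
  by (rule ext_abs[OF xC(1)]) (simp_all add: xC(2) uC_abs)

definition Ind :: "'a set \<Rightarrow> 'a \<Rightarrow> real" where
  "Ind C s = (1 + xal s * xC C s) / 2"

lemma Ind_cont: "continuous_on UNIV (Ind C)"
  unfolding Ind_def by (intro continuous_intros) simp_all

lemma Ind_iso:
  assumes "open C" "closed C" "\<not> a islimpt UNIV"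
  shows "Ind C a = (if sig a \<in> C then 1 else 0)"
proof -
  have "xC C a = bet a * uC C (sig a)"
    using ext_val[OF assms(3) xC(1)[OF assms(1,2)]] xC(2)[OF assms(1,2)] uC_abs[OF assms(1,2)] by simp
  moreover have "xal a = bet a" by (rule xal_iso[OF assms(3)])
  ultimately have "xal a * xC C a = (bet a * bet a) * uC C (sig a)" by simp
  then have "xal a * xC C a = uC C (sig a)" using bet_sq[OF assms(3)] by simp
  then show ?thesis unfolding Ind_def using assms by (simp add: uC_apply)
qed

lemma Ind_01: "open C \<Longrightarrow> closed C \<Longrightarrow> Ind C s = 0 \<or> Ind C s = 1"
  using xal_abs[of s] xC_abs[of C s] unfolding Ind_def
  by (auto simp: abs_if split: if_splits)

lemma Ind_eqI:
  assumes "continuous_on UNIV g" "\<And>a. \<not> a islimpt UNIV \<Longrightarrow> Ind C a = g a"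
  shows "Ind C = g"
  by (rule iso_eq[OF fin Ind_cont assms(1)]) (rule assms(2))

lemma Ind_compl: assumes "open C" "closed C" shows "Ind (- C) = (\<lambda>s. 1 - Ind C s)"
proof (rule Ind_eqI)
  show "continuous_on UNIV (\<lambda>s. 1 - Ind C s)" by (intro continuous_intros Ind_cont)
  have c: "open (-C)" "closed (-C)" using assms by (simp_all add: open_Compl closed_Compl)
  fix a :: 'a assume a: "\<not> a islimpt UNIV"
  show "Ind (- C) a = 1 - Ind C a" using Ind_iso[OF c a] Ind_iso[OF assms a] by simp
qed

lemma Ind_int: assumes "open C1" "closed C1" "open C2" "closed C2"
  shows "Ind (C1 \<inter> C2) = (\<lambda>s. Ind C1 s * Ind C2 s)"
proof (rule Ind_eqI)
  show "continuous_on UNIV (\<lambda>s. Ind C1 s * Ind C2 s)" by (intro continuous_intros Ind_cont)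
  have c: "open (C1 \<inter> C2)" "closed (C1 \<inter> C2)" using assms by (simp_all add: open_Int closed_Int)
  fix a :: 'a assume a: "\<not> a islimpt UNIV"
  show "Ind (C1 \<inter> C2) a = Ind C1 a * Ind C2 a"
    using Ind_iso[OF c a] Ind_iso[OF assms(1,2) a] Ind_iso[OF assms(3,4) a] by simp
qed

lemma Ind_empty: "Ind {} = (\<lambda>s. 0)"
  by (rule Ind_eqI) (auto simp: Ind_iso)

lemma Ind_univ: "Ind UNIV = (\<lambda>s. 1)"
  by (rule Ind_eqI) (auto simp: Ind_iso)

lemma Ind_Inter:
  assumes "finite G" "\<forall>C\<in>G. open C \<and> closed C \<and> Ind C s = 1"
  shows "open (\<Inter>G) \<and> closed (\<Inter>G) \<and> Ind (\<Inter>G) s = 1"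
  using assms
proof (induction G rule: finite_induct)
  case empty
  then show ?case by (simp add: Ind_univ)
next
  case (insert C G)
  then have h: "open (\<Inter>G)" "closed (\<Inter>G)" "Ind (\<Inter>G) s = 1" "open C" "closed C" "Ind C s = 1" by simp_all
  have "\<Inter>(insert C G) = C \<inter> \<Inter>G" by simp
  moreover have "Ind (C \<inter> \<Inter>G) s = 1" using Ind_int[OF h(4,5,1,2)] h(3,6) by simp
  ultimately show ?case using h by auto
qed

lemma sh_ex: "\<exists>q. \<forall>C. open C \<and> closed C \<longrightarrow> (q \<in> C \<longleftrightarrow> Ind C s = 1)"
proof -
  define G where "G = {C. open C \<and> closed C \<and> Ind C s = 1}"
  have "UNIV \<inter> \<Inter>G \<noteq> {}"
  proof (rule compact_imp_fip[OF cpt])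
    show "\<And>T. T \<in> G \<Longrightarrow> closed T" unfolding G_def by simp
    fix G' assume "finite G'" "G' \<subseteq> G"
    then have "\<forall>C\<in>G'. open C \<and> closed C \<and> Ind C s = 1" unfolding G_def by blast
    then have "Ind (\<Inter>G') s = 1" using Ind_Inter[OF \<open>finite G'\<close>] by simp
    then have "\<Inter>G' \<noteq> {}" using Ind_empty by (metis zero_neq_one)
    then show "UNIV \<inter> \<Inter>G' \<noteq> {}" by simp
  qed
  then obtain q where q: "q \<in> \<Inter>G" by blast
  have qG: "q \<in> C" if "C \<in> G" for C using q that by (rule InterD)
  show ?thesis
  proof (intro exI[of _ q] allI impI iffI)
    fix C :: "'a set" assume C: "open C \<and> closed C"
    show "Ind C s = 1" if "q \<in> C"
    proof (rule ccontr)
      assume "Ind C s \<noteq> 1"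
      then have "Ind C s = 0" using Ind_01 C by blast
      then have "Ind (-C) s = 1" using Ind_compl C by simp
      then have "-C \<in> G" unfolding G_def using C by (simp add: open_Compl closed_Compl)
      then have "q \<in> -C" by (rule qG)
      then show False using that by simp
    qed
    show "q \<in> C" if "Ind C s = 1"
      by (rule qG) (use that C in \<open>simp add: G_def\<close>)
  qed
qed

lemma sh_unique:
  assumes "\<forall>C. open C \<and> closed C \<longrightarrow> (q1 \<in> C \<longleftrightarrow> Ind C s = 1)"
    and "\<forall>C. open C \<and> closed C \<longrightarrow> (q2 \<in> C \<longleftrightarrow> Ind C s = 1)"
  shows "q1 = q2"
proof (rule ccontr)
  assume "q1 \<noteq> q2"
  then obtain C where C: "open C" "closed C" "q1 \<in> C" "C \<inter> {q2} = {}"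
    using clopen_nbhd[OF cpt fin, of "{q2}" q1] by auto
  then show False using assms by blast
qed

definition sh :: "'a \<Rightarrow> 'a" where
  "sh s = (THE q. \<forall>C. open C \<and> closed C \<longrightarrow> (q \<in> C \<longleftrightarrow> Ind C s = 1))"

lemma sh_prop: "open C \<Longrightarrow> closed C \<Longrightarrow> (sh s \<in> C \<longleftrightarrow> Ind C s = 1)"
proof -
  obtain q where q: "\<forall>C. open C \<and> closed C \<longrightarrow> (q \<in> C \<longleftrightarrow> Ind C s = 1)" using sh_ex by blast
  have "sh s = q" unfolding sh_def
    by (rule the_equality, rule q, rule sh_unique[OF _ q], assumption)
  then show "open C \<Longrightarrow> closed C \<Longrightarrow> (sh s \<in> C \<longleftrightarrow> Ind C s = 1)" using q by blast
qed

lemma sh_iso: assumes "\<not> a islimpt UNIV" shows "sh a = sig a"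
proof -
  have q: "\<forall>C. open C \<and> closed C \<longrightarrow> (sig a \<in> C \<longleftrightarrow> Ind C a = 1)"
    using Ind_iso assms by auto
  show ?thesis unfolding sh_def
    by (rule the_equality, rule q, rule sh_unique[OF _ q], assumption)
qed

lemma Ind_open: "open {t. Ind C t > 1/2}"
  by (rule open_Collect_less) (auto intro: Ind_cont continuous_intros)

lemma Ind_half: "open C \<Longrightarrow> closed C \<Longrightarrow> Ind C t > 1/2 \<longleftrightarrow> Ind C t = 1"
  using Ind_01[of C t] by auto

lemma sh_cont: "continuous_on UNIV sh"
  unfolding continuous_on_open_vimage[OF open_UNIV]
proof (intro allI impI)
  fix B :: "'a set" assume "open B"
  show "open (sh -` B \<inter> UNIV)"
    unfolding open_subopen[of "sh -` B \<inter> UNIV"]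
  proof (intro ballI)
    fix s assume "s \<in> sh -` B \<inter> UNIV"
    then have "sh s \<notin> -B" by simp
    moreover have "closed (-B)" using \<open>open B\<close> by (simp add: closed_Compl)
    ultimately obtain C where C: "open C" "closed C" "sh s \<in> C" "C \<inter> -B = {}"
      using clopen_nbhd[OF cpt fin] by metis
    define T where "T = {t. Ind C t > 1/2}"
    have "open T" unfolding T_def by (rule Ind_open)
    moreover have "s \<in> T" unfolding T_def using sh_prop[OF C(1,2)] C(3) by simp
    moreover have "T \<subseteq> sh -` B \<inter> UNIV"
    proof
      fix t assume "t \<in> T"
      then have "sh t \<in> C" unfolding T_def using sh_prop[OF C(1,2)] Ind_half[OF C(1,2)] by simp
      then show "t \<in> sh -` B \<inter> UNIV" using C(4) by blast
    qed
    ultimately show "\<exists>T. open T \<and> s \<in> T \<and> T \<subseteq> sh -` B \<inter> UNIV" by blast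
  qed
qed

lemma sh_surj: "range sh = UNIV"
proof (rule ccontr)
  assume "range sh \<noteq> UNIV"
  have "compact (range sh)" by (rule compact_continuous_image[OF sh_cont cpt])
  then have "closed (range sh)" by (rule compact_imp_closed)
  then have "open (- range sh)" by (simp add: open_Compl)
  moreover have "- range sh \<noteq> {}" using \<open>range sh \<noteq> UNIV\<close> by auto
  ultimately have "\<exists>b\<in>- range sh. \<not> b islimpt UNIV" by (rule iso_dense[OF fin])
  then obtain b where b: "b \<in> - range sh" "\<not> b islimpt UNIV" by blast
  obtain a where a: "\<not> a islimpt UNIV" "sig a = b" using sig_surj[OF b(2)] by blast
  have "sh a = b" using sh_iso[OF a(1)] a(2) by simp
  then show False using b(1) by auto
qed

lemma sh_lim:
  assumes p: "p islimpt UNIV" shows "sh p islimpt UNIV"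
proof (rule ccontr)
  assume q: "\<not> sh p islimpt UNIV"
  define C where "C = {sh p}"
  have C: "open C" "closed C" unfolding C_def using iso_open[OF q] by simp_all
  define T where "T = {t. Ind C t > 1/2}"
  have "open T" unfolding T_def by (rule Ind_open)
  have "Ind C p = 1" using sh_prop[OF C, of p] unfolding C_def by simp
  then have "p \<in> T" unfolding T_def by simp
  have inT: "sig t = sh p" if "t \<in> T" "\<not> t islimpt UNIV" for t
    using that sh_prop[OF C, of t] Ind_half[OF C, of t] sh_iso[of t] unfolding T_def C_def by simp
  have "open (T - {p})" using \<open>open T\<close> by (intro open_Diff) simp_all
  moreover have "T - {p} \<noteq> {}"
  proof -
    obtain y where "y \<in> T" "y \<noteq> p" using islimptE[OF p \<open>p \<in> T\<close> \<open>open T\<close>] by blast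
    then show ?thesis by blast
  qed
  ultimately have "\<exists>a1\<in>T - {p}. \<not> a1 islimpt UNIV" by (rule iso_dense[OF fin])
  then obtain a1 where a1: "a1 \<in> T - {p}" "\<not> a1 islimpt UNIV" by blast
  have "open (T - {a1})" using \<open>open T\<close> by (intro open_Diff) simp_all
  moreover have "p \<in> T - {a1}" using \<open>p \<in> T\<close> a1 by auto
  ultimately obtain y where "y \<in> T - {a1}" "y \<noteq> p" using islimptE[OF p] by metis
  then have "T - {a1} - {p} \<noteq> {}" by blast
  moreover have "open (T - {a1} - {p})" using \<open>open (T - {a1})\<close> by (rule open_Diff) simp
  ultimately have "\<exists>a2\<in>T - {a1} - {p}. \<not> a2 islimpt UNIV" by (rule iso_dense[OF fin, rotated])
  then obtain a2 where a2: "a2 \<in> T - {a1} - {p}" "\<not> a2 islimpt UNIV" by blast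
  have "sig a1 = sig a2" using inT[of a1] inT[of a2] a1 a2 by simp
  then have "a1 = a2" using sig_inj a1(2) a2(2) by blast
  then show False using a2 by blast
qed

lemma sh_inj: "inj sh"
proof -
  define K where "K = {x :: 'a. x islimpt UNIV}"
  have "sh ` K \<subseteq> K" unfolding K_def using sh_lim by blast
  moreover have "K \<subseteq> sh ` K"
  proof
    fix q assume "q \<in> K"
    obtain s where s: "sh s = q" using sh_surj by (metis UNIV_I imageE)
    have "s \<in> K"
    proof (rule ccontr)
      assume "s \<notin> K"
      then have "\<not> s islimpt UNIV" unfolding K_def by simp
      then have "\<not> q islimpt UNIV" using sh_iso sig_iso s by metis
      then show False using \<open>q \<in> K\<close> unfolding K_def by simp
    qed
    then show "q \<in> sh ` K" using s by blast
  qed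
  ultimately have "sh ` K = K" by blast
  then have injK: "inj_on sh K" using eq_card_imp_inj_on[of K sh] fin unfolding K_def by simp
  show ?thesis
  proof (rule injI)
    fix s1 s2 assume eq: "sh s1 = sh s2"
    show "s1 = s2"
    proof (cases "s1 islimpt UNIV"; cases "s2 islimpt UNIV")
      assume "s1 islimpt UNIV" "s2 islimpt UNIV"
      then show ?thesis using injK eq unfolding K_def inj_on_def by blast
    next
      assume "s1 islimpt UNIV" "\<not> s2 islimpt UNIV"
      then show ?thesis using eq sh_lim sh_iso sig_iso by metis
    next
      assume "\<not> s1 islimpt UNIV" "s2 islimpt UNIV"
      then show ?thesis using eq sh_lim sh_iso sig_iso by metis
    next
      assume "\<not> s1 islimpt UNIV" "\<not> s2 islimpt UNIV"
      then show ?thesis using eq sh_iso sig_inj by metis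
    qed
  qed
qed

lemma sh_homeo: "\<exists>g. homeomorphism UNIV UNIV sh g"
  by (rule homeomorphism_compact[OF cpt sh_cont sh_surj]) (use sh_inj in simp)

definition shi :: "'a \<Rightarrow> 'a" where "shi = (SOME g. homeomorphism UNIV UNIV sh g)"

lemma shi: "homeomorphism UNIV UNIV sh shi"
  unfolding shi_def using sh_homeo by (rule someI_ex)

lemma shi_cont: "continuous_on UNIV shi" and shi_sh: "shi (sh x) = x"
  using shi unfolding homeomorphism_def by auto

lemma F_ext:
  fixes s :: "'a \<Rightarrow>\<^sub>C real"
  assumes s: "norm s \<le> 1" "\<And>x. \<bar>s x\<bar> = 1" and a: "\<not> a islimpt UNIV"
  shows "F s (sh a) = xal a * s a"
proof -
  define yf where "yf t = xal (shi t) * s (shi t)" for t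
  have yc: "continuous_on UNIV yf" unfolding yf_def
    by (intro continuous_intros continuous_on_compose2[OF continuous_on_apply_bcontfun shi_cont]) auto
  define y where "y = Bcontfun yf"
  have ya: "apply_bcontfun y = yf" unfolding y_def by (rule cont_bcontfun[OF cpt yc])
  have yabs: "\<bar>y t\<bar> = 1" for t using xal_abs s(2) by (simp add: ya yf_def abs_mult)
  have yn: "norm y \<le> 1" by (rule norm_ptI) (simp add: yabs)
  obtain x where x: "norm x \<le> 1" "F x = y" using Fsurj[OF yn] by blast
  have "apply_bcontfun x = apply_bcontfun s"
  proof (rule iso_eq[OF fin])
    fix a' :: 'a assume a': "\<not> a' islimpt UNIV"
    have "x a' = bet a' * y (sig a')" using ext_val[OF a' x(1)] x(2) yabs by simp
    also have "\<dots> = bet a' * (xal a' * s a')" using sh_iso[OF a'] shi_sh[of a'] by (simp add: ya yf_def)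
    also have "\<dots> = (bet a' * bet a') * s a'" using xal_iso[OF a'] by simp
    also have "\<dots> = s a'" using bet_sq[OF a'] by simp
    finally show "x a' = s a'" .
  qed simp_all
  then have "x = s" by (simp add: bcontfun_eqI)
  then have "F s = y" using x by simp
  then show ?thesis using shi_sh[of a] by (simp add: ya yf_def)
qed

lemma key_est:
  assumes f: "norm f \<le> 1" and a: "\<not> a islimpt UNIV" and d: "0 < \<delta>" and eps: "\<epsilon> = 1 \<or> \<epsilon> = -1"
  shows "\<bar>F f (sh a) - xal a * \<epsilon>\<bar> \<le> max (1 + \<delta>) \<bar>f a - \<epsilon>\<bar>"
proof -
  have fb: "\<bar>f x\<bar> \<le> 1" for x using norm_pt[of f x] f by linarith
  have cP: "closed {x. \<delta> \<le> f x}" by (rule closed_Collect_le) (auto intro: continuous_intros)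
  have cN: "closed {x. f x \<le> - \<delta>}" by (rule closed_Collect_le) (auto intro: continuous_intros)
  have dj: "{x. \<delta> \<le> f x} \<inter> {x. f x \<le> - \<delta>} = {}" using d by auto
  obtain C where C: "open C" "closed C" "{x. \<delta> \<le> f x} \<subseteq> C" "C \<inter> {x. f x \<le> - \<delta>} = {}"
    using clopen_sep[OF cpt fin cP cN dj] by blast
  have oa: "open {a}" by (rule iso_open[OF a])
  define C' where "C' = (if \<epsilon> = 1 then insert a C else C - {a})"
  have C': "open C'" "closed C'"
  proof -
    have "insert a C = {a} \<union> C" by blast
    then have "open (insert a C)" using open_Un[OF oa C(1)] by (simp only:)
    moreover have "closed (insert a C)" using C(2) by simp
    moreover have "open (C - {a})" using C(1) by (rule open_Diff) simp
    moreover have "closed (C - {a})" using C(2) oa by (rule closed_Diff)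
    ultimately show "open C'" "closed C'" unfolding C'_def by simp_all
  qed
  define s where "s = uC C'"
  have sa: "s x = (if x \<in> C' then 1 else -1)" for x unfolding s_def by (rule uC_apply[OF C'])
  have s1: "norm s \<le> 1" unfolding s_def by (rule uC_norm[OF C'])
  have s2: "\<bar>s x\<bar> = 1" for x unfolding s_def by (rule uC_abs[OF C'])
  have saa: "s a = \<epsilon>" using sa[of a] eps unfolding C'_def by auto
  have Fs: "F s (sh a) = xal a * \<epsilon>" using F_ext[OF s1 s2 a] saa by simp
  have "dist f s \<le> max (1 + \<delta>) \<bar>f a - \<epsilon>\<bar>"
  proof (rule dist_ptI)
    fix x
    show "\<bar>f x - s x\<bar> \<le> max (1 + \<delta>) \<bar>f a - \<epsilon>\<bar>"
    proof (cases "x = a")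
      case True
      then show ?thesis using saa by simp
    next
      case False
      then have "s x = (if x \<in> C then 1 else -1)" using sa[of x] unfolding C'_def by auto
      moreover have "x \<in> C \<Longrightarrow> f x > - \<delta>"
      proof -
        assume "x \<in> C"
        then have "x \<notin> {x. f x \<le> - \<delta>}" using C(4) by blast
        then show "f x > - \<delta>" by simp
      qed
      moreover have "x \<notin> C \<Longrightarrow> f x < \<delta>"
      proof -
        assume "x \<notin> C"
        then have "x \<notin> {x. \<delta> \<le> f x}" using C(3) by blast
        then show "f x < \<delta>" by simp
      qed
      ultimately have "\<bar>f x - s x\<bar> \<le> 1 + \<delta>" using fb[of x] by (cases "x \<in> C") (simp_all add: abs_le_iff)
      then show ?thesis by simp
    qed
  qed
  moreover have "\<bar>F f (sh a) - F s (sh a)\<bar> \<le> dist f s" by (rule Fpt[OF f s1])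
  ultimately show ?thesis using Fs by simp
qed

lemma le_eps: "(\<And>\<delta>. 0 < \<delta> \<Longrightarrow> x \<le> \<delta>) \<Longrightarrow> (x::real) \<le> 0"
proof (rule ccontr)
  assume h: "\<And>\<delta>. 0 < \<delta> \<Longrightarrow> x \<le> \<delta>" and "\<not> x \<le> 0"
  have "x \<le> x / 2" using h[of "x / 2"] \<open>\<not> x \<le> 0\<close> by linarith
  with \<open>\<not> x \<le> 0\<close> show False by linarith
qed

lemma main:
  "\<exists>(\<sigma> :: 'a \<Rightarrow> 'a) \<sigma>' (\<alpha> :: 'a \<Rightarrow> real).
           homeomorphism UNIV UNIV \<sigma> \<sigma>' \<and>
           continuous_on UNIV \<alpha> \<and> (\<forall>x. \<alpha> x \<in> {-1, 1}) \<and>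
           (\<forall>f. norm f \<le> 1 \<longrightarrow> (\<forall>a. \<not> a islimpt UNIV \<longrightarrow>
              (apply_bcontfun f a = 0 \<longrightarrow> apply_bcontfun (F f) (\<sigma> a) = 0) \<and>
              (apply_bcontfun f a * \<alpha> a < 0 \<longrightarrow> apply_bcontfun (F f) (\<sigma> a) \<le> 0) \<and>
              (apply_bcontfun f a * \<alpha> a > 0 \<longrightarrow> apply_bcontfun (F f) (\<sigma> a) \<ge> 0)))"
proof -
  have H1: "homeomorphism UNIV UNIV sh shi" by (rule shi)
  have H2: "continuous_on UNIV (apply_bcontfun xal)" by simp
  have H3: "\<forall>x. xal x \<in> {-1, 1}"
  proof
    fix x show "xal x \<in> {-1, 1}" using xal_abs[of x] by (auto simp: abs_if split: if_splits)
  qed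
  have H4: "\<forall>f. norm f \<le> 1 \<longrightarrow> (\<forall>a. \<not> a islimpt UNIV \<longrightarrow>
              (apply_bcontfun f a = 0 \<longrightarrow> apply_bcontfun (F f) (sh a) = 0) \<and>
              (apply_bcontfun f a * xal a < 0 \<longrightarrow> apply_bcontfun (F f) (sh a) \<le> 0) \<and>
              (apply_bcontfun f a * xal a > 0 \<longrightarrow> apply_bcontfun (F f) (sh a) \<ge> 0))"
  proof (intro allI impI conjI)
  fix f :: "'a \<Rightarrow>\<^sub>C real" and a :: 'a
  assume f: "norm f \<le> 1" and a: "\<not> a islimpt UNIV"
  have xa: "xal a = 1 \<or> xal a = -1" using xal_abs[of a] by (auto simp: abs_if split: if_splits)
  have fb: "\<bar>f a\<bar> \<le> 1" using norm_pt[of f a] f by linarith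
  {
    assume fa: "f a = 0"
    have "F f (sh a) \<le> 0"
    proof (rule le_eps)
      fix \<delta> :: real assume d: "0 < \<delta>"
      have "\<bar>F f (sh a) - xal a * (- xal a)\<bar> \<le> max (1 + \<delta>) \<bar>f a - (- xal a)\<bar>"
        by (rule key_est[OF f a d]) (use xa in auto)
      then show "F f (sh a) \<le> \<delta>" using xa fa d by (auto simp: abs_if split: if_splits)
    qed
    moreover have "- F f (sh a) \<le> 0"
    proof (rule le_eps)
      fix \<delta> :: real assume d: "0 < \<delta>"
      have "\<bar>F f (sh a) - xal a * xal a\<bar> \<le> max (1 + \<delta>) \<bar>f a - xal a\<bar>"
        by (rule key_est[OF f a d]) (use xa in auto)
      then show "- F f (sh a) \<le> \<delta>" using xa fa d by (auto simp: abs_if split: if_splits)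
    qed
    ultimately show "F f (sh a) = 0" by simp
  }
  {
    assume fa: "f a * xal a < 0"
    show "F f (sh a) \<le> 0"
    proof (rule le_eps)
      fix \<delta> :: real assume d: "0 < \<delta>"
      have "\<bar>F f (sh a) - xal a * (- xal a)\<bar> \<le> max (1 + \<delta>) \<bar>f a - (- xal a)\<bar>"
        by (rule key_est[OF f a d]) (use xa in auto)
      moreover have "\<bar>f a - (- xal a)\<bar> \<le> 1" using xa fa fb by (auto simp: abs_if)
      ultimately show "F f (sh a) \<le> \<delta>" using xa d by (auto simp: abs_if split: if_splits)
    qed
  }
  {
    assume fa: "f a * xal a > 0"
    have "- F f (sh a) \<le> 0"
    proof (rule le_eps)
      fix \<delta> :: real assume d: "0 < \<delta>"
      have "\<bar>F f (sh a) - xal a * xal a\<bar> \<le> max (1 + \<delta>) \<bar>f a - xal a\<bar>"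
        by (rule key_est[OF f a d]) (use xa in auto)
      moreover have "\<bar>f a - xal a\<bar> \<le> 1" using xa fa fb by (auto simp: abs_if zero_less_mult_iff)
      ultimately show "- F f (sh a) \<le> \<delta>" using xa d by (auto simp: abs_if split: if_splits)
    qed
    then show "F f (sh a) \<ge> 0" by simp
  }
  qed
  show ?thesis by (intro exI[of _ sh] exI[of _ shi] exI[of _ "apply_bcontfun xal"] conjI H1 H2 H3 H4)
qed

end

theorem lemma3p1:
  fixes F :: "('a::t2_space \<Rightarrow>\<^sub>C real) \<Rightarrow> ('a \<Rightarrow>\<^sub>C real)"
  assumes "compact (UNIV :: 'a set)"
    and "infinite (UNIV :: 'a set)"
    and "finite {x :: 'a. x islimpt UNIV}"
    and "bij_betw F {f. norm f \<le> 1} {f. norm f \<le> 1}"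
    and "\<forall>f \<in> {f. norm f \<le> 1}. \<forall>g \<in> {f. norm f \<le> 1}. dist (F f) (F g) \<le> dist f g"
  shows "\<exists>(\<sigma> :: 'a \<Rightarrow> 'a) \<sigma>' (\<alpha> :: 'a \<Rightarrow> real).
           homeomorphism UNIV UNIV \<sigma> \<sigma>' \<and>
           continuous_on UNIV \<alpha> \<and> (\<forall>x. \<alpha> x \<in> {-1, 1}) \<and>
           (\<forall>f. norm f \<le> 1 \<longrightarrow> (\<forall>a. \<not> a islimpt UNIV \<longrightarrow>
              (apply_bcontfun f a = 0 \<longrightarrow> apply_bcontfun (F f) (\<sigma> a) = 0) \<and>
              (apply_bcontfun f a * \<alpha> a < 0 \<longrightarrow> apply_bcontfun (F f) (\<sigma> a) \<le> 0) \<and>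
              (apply_bcontfun f a * \<alpha> a > 0 \<longrightarrow> apply_bcontfun (F f) (\<sigma> a) \<ge> 0)))"
proof -
  interpret plast F by (rule plast.intro[OF assms(1) assms(3) assms(4) assms(5)])
  show ?thesis by (rule main)
qed

end
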